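(* In the supercuspidal setting below, let $p$ be odd, $L/\mathbb Q_p$ unramified, $k=c_0\ge2$, and assume $k\ge10$ or $p\ge10$. Let $\psi_0$ be the trivial character modulo $p^k$ and suppose $p\mid a_1a_2a_3$. Then $\widehat H(\psi_0,a_1,a_2,a_3)=0$ unless $p^k\mid a_1a_2a_3$, in which case $$\widehat H(\psi_0,a_1,a_2,a_3)=\overline\gamma\,p^{-2k}\,\tau_L(\xi)\,S(a_1,0;p^k)S(a_2,0;p^k)S(a_3,0;p^k),$$ where $\tau_L(\xi)=\sum_{t\in(\mathcal O_L/p^k\mathcal O_L)^\times}\xi(t)e_{p^k}(-\mathrm{Tr}(t))$ and $S(a,0;p^k)=\sum^*_{x\bmod p^k}e_{p^k}(ax)$.
   Context: Supercuspidal setting: $p$ is a prime, $L/\mathbb Q_p$ a quadratic extension with ring of integers $\mathcal O_L$, ramification index $e\in\{1,2\}$, $d=v_p(\mathrm{disc}(L/\mathbb Q_p))$; $\eta_L$ is the nontrivial quadratic character of $\mathbb Q_p^\times$ trivial on $\mathrm{Nm}(L^\times)$. $\xi$ is a character of $L^\times$ with $\xi\neq\xi\circ(\text{Galois conjugation})$ and $\xi|_{\mathbb Q_p^\times}=\eta_L$, with $(L/\mathbb Q_p,\xi)$ an admissible pair (corresponding to a trivial central character dihedral supercuspidal representation of $\mathrm{PGL}_2(\mathbb Q_p)$). $c(\xi)$ is its conductor exponent and $c_0=c(\xi)/e$. Set $\kappa=c_0$ if $L$ unramified, $\kappa=c_0+1$ if $L$ ramified. Let $\gamma$ be a fixed complex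 number of modulus $1$ depending only on $L$. For integers $m,n$ and $k\ge1$, $$H(m,n;p^k)=\overline\gamma\,p^{-d/2}\sum_{\substack{t\in(\mathcal O_L/p^k\mathcal O_L)^\times\\ \mathrm{Nm}(t)\equiv mn\ (p^k)}}\xi(t)\,e_{p^k}(-\mathrm{Tr}(t))$$ if $k\ge\kappa$ and $p\nmid mn$, and $H(m,n;p^k)=0$ otherwise. For a Dirichlet character $\psi$ mod $p^k$ and integers $a_1,a_2,a_3$, $$\widehat H(\psi,a_1,a_2,a_3)=p^{-2k}\sum_{u,x_1,x_2,x_3\bmod p^k}\overline\psi(u)H(\overline u x_1x_2x_3,1;p^k)\,e_{p^k}(a_1x_1+a_2x_2+a_3x_3-ua_1a_2a_3).$$ Here $e_q(x)=\exp(2\pi i x/q)$, $\overline u$ is the inverse mod $p^k$, and Dirichlet characters vanish on non-units. *)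

theory Defs
  imports "HOL-Number_Theory.Number_Theory" Complex_Main
begin

text \<open>Model of O_L / p^k O_L for L/Q_p unramified quadratic, p odd:
  O_L = Z_p[sqrt eps] with eps an integer quadratic non-residue mod p.
  An element x + y sqrt eps is represented by the pair (x,y) with 0 <= x,y < p^k.\<close>

definition eadd :: "int \<Rightarrow> int \<Rightarrow> complex" where
  "eadd q x = cis (2 * pi * of_int x / of_int q)"

definition mulL :: "int \<Rightarrow> int \<Rightarrow> int \<times> int \<Rightarrow> int \<times> int \<Rightarrow> int \<times> int" where
  "mulL eps q a b = ((fst a * fst b + eps * snd a * snd b) mod q,
                     (fst a * snd b + snd a * fst b) mod q)"

definition normL :: "int \<Rightarrow> int \<times> int \<Rightarrow> int" where
  "normL eps t = fst t ^ 2 - eps * snd t ^ 2"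

definition traceL :: "int \<times> int \<Rightarrow> int" where
  "traceL t = 2 * fst t"

definition conjL :: "int \<Rightarrow> int \<times> int \<Rightarrow> int \<times> int" where
  "conjL q t = (fst t, (- snd t) mod q)"

definition unitsL :: "int \<Rightarrow> int \<Rightarrow> nat \<Rightarrow> (int \<times> int) set" where
  "unitsL eps p k = {t. fst t \<in> {0..<p^k} \<and> snd t \<in> {0..<p^k} \<and> \<not> p dvd normL eps t}"

text \<open>Restriction to O_L^\<times> of a character xi of L^\<times> with xi|Q_p^\<times> = eta_L
  (eta_L unramified, so trivial on Z_p^\<times>), xi \<noteq> xi o conjugation, and conductor
  exponent exactly c(xi) = k.  (xi(p) = -1 is forced and plays no role in H.)\<close>
definition admissible_xi :: "int \<Rightarrow> int \<Rightarrow> nat \<Rightarrow> (int \<times> int \<Rightarrow> complex) \<Rightarrow> bool" where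
  "admissible_xi eps p k xi \<longleftrightarrow>
     xi (1, 0) = 1 \<and>
     (\<forall>a\<in>unitsL eps p k. \<forall>b\<in>unitsL eps p k. xi (mulL eps (p^k) a b) = xi a * xi b) \<and>
     (\<forall>x\<in>{0..<p^k}. \<not> p dvd x \<longrightarrow> xi (x, 0) = 1) \<and>
     (\<exists>t\<in>unitsL eps p k. xi (conjL (p^k) t) \<noteq> xi t) \<and>
     (\<exists>t\<in>unitsL eps p k. fst t mod p^(k-1) = 1 mod p^(k-1) \<and> snd t mod p^(k-1) = 0 \<and> xi t \<noteq> 1)"

text \<open>H(m,n;p^k); here d = 0 (unramified), kappa = c_0.\<close>
definition Hk :: "int \<Rightarrow> int \<Rightarrow> nat \<Rightarrow> nat \<Rightarrow> (int \<times> int \<Rightarrow> complex) \<Rightarrow> complex \<Rightarrow> int \<Rightarrow> int \<Rightarrow> complex" where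
  "Hk eps p c0 k xi \<gamma> m n =
     (if k \<ge> c0 \<and> \<not> p dvd (m * n) then
        cnj \<gamma> * (\<Sum>t\<in>{t\<in>unitsL eps p k. [normL eps t = m * n] (mod p^k)}.
                     xi t * eadd (p^k) (- traceL t))
      else 0)"

definition inv_mod :: "int \<Rightarrow> int \<Rightarrow> int" where
  "inv_mod q u = (SOME v. v \<in> {0..<q} \<and> [u * v = 1] (mod q))"

definition Hhat :: "int \<Rightarrow> int \<Rightarrow> nat \<Rightarrow> nat \<Rightarrow> (int \<times> int \<Rightarrow> complex) \<Rightarrow> complex
                    \<Rightarrow> (int \<Rightarrow> complex) \<Rightarrow> int \<Rightarrow> int \<Rightarrow> int \<Rightarrow> complex" where
  "Hhat eps p c0 k xi \<gamma> \<psi> a1 a2 a3 =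
     inverse (of_int (p ^ (2 * k))) *
     (\<Sum>u\<in>{0..<p^k}. \<Sum>x1\<in>{0..<p^k}. \<Sum>x2\<in>{0..<p^k}. \<Sum>x3\<in>{0..<p^k}.
        cnj (\<psi> u) * Hk eps p c0 k xi \<gamma> (inv_mod (p^k) u * x1 * x2 * x3) 1 *
        eadd (p^k) (a1 * x1 + a2 * x2 + a3 * x3 - u * a1 * a2 * a3))"

definition psi0 :: "int \<Rightarrow> nat \<Rightarrow> int \<Rightarrow> complex" where
  "psi0 p k u = (if coprime u p then 1 else 0)"

definition tauL :: "int \<Rightarrow> int \<Rightarrow> nat \<Rightarrow> (int \<times> int \<Rightarrow> complex) \<Rightarrow> complex" where
  "tauL eps p k xi = (\<Sum>t\<in>unitsL eps p k. xi t * eadd (p^k) (- traceL t))"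

definition Ram0 :: "int \<Rightarrow> nat \<Rightarrow> int \<Rightarrow> complex" where
  "Ram0 p k a = (\<Sum>x\<in>{x\<in>{0..<p^k}. coprime x p}. eadd (p^k) (a * x))"

end

theory Submission
  imports Defs
begin

lemma eadd_add: "eadd q (x + y) = eadd q x * eadd q y"
  unfolding eadd_def by (simp add: cis_mult add_divide_distrib distrib_left)

lemma eadd_mult_q: "q \<noteq> 0 \<Longrightarrow> eadd q (q * n) = 1"
proof -
  assume "q \<noteq> 0"
  then have "2 * pi * of_int (q*n) / of_int q = 2 * pi * real_of_int n" by simp
  then show ?thesis unfolding eadd_def
    by (metis cis_multiple_2pi Ints_of_int)
qed

lemma eadd_mod: "q \<noteq> 0 \<Longrightarrow> eadd q (x mod q) = eadd q x"
proof -
  assume q: "q \<noteq> 0"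
  have "eadd q x = eadd q (x mod q + q * (x div q))" by simp
  also have "\<dots> = eadd q (x mod q) * eadd q (q * (x div q))" by (rule eadd_add)
  also have "\<dots> = eadd q (x mod q)" using q by (simp add: eadd_mult_q)
  finally show ?thesis by simp
qed

lemma eadd_cong: "q \<noteq> 0 \<Longrightarrow> [x = y] (mod q) \<Longrightarrow> eadd q x = eadd q y"
  by (metis cong_def eadd_mod)

lemma eadd_eq_1: assumes "q > 0" "eadd q x = 1" shows "q dvd x"
proof -
  have "cos (2 * pi * of_int x / of_int q) = 1"
    using assms(2) unfolding eadd_def by (metis cis.sel(1) one_complex.sel(1))
  then obtain n :: int where n: "2 * pi * of_int x / of_int q = of_int n * 2 * pi"
    using cos_one_2pi_int by blast
  then have "real_of_int x = of_int n * of_int q" using assms(1) pi_gt_zero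
    by (simp add: field_simps)
  then have "x = n * q" by (metis of_int_eq_iff of_int_mult)
  then show ?thesis by simp
qed

lemma inv_mod_props:
  fixes p u :: int
  assumes "prime p" "coprime u p"
  shows "inv_mod (p^k) u \<in> {0..<p^k} \<and> [u * inv_mod (p^k) u = 1] (mod p^k)"
proof -
  have q: "p^k > 0" using prime_gt_0_int[OF assms(1)] by simp
  have "coprime u (p^k)" using assms(2) by simp
  then obtain x where x: "[u * x = 1] (mod p^k)" using cong_solve_coprime_int by blast
  have "[u * (x mod p^k) = 1] (mod p^k)"
    using x by (metis cong_def mod_mult_right_eq)
  then have "\<exists>v. v \<in> {0..<p^k} \<and> [u * v = 1] (mod p^k)" using q
    by (intro exI[of _ "x mod p^k"]) simp
  then show ?thesis unfolding inv_mod_def by (rule someI_ex)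
qed

lemma inv_mod_coprime:
  fixes p u :: int
  assumes "prime p" "coprime u p" "k \<ge> 1"
  shows "coprime (inv_mod (p^k) u) p"
proof -
  have c: "[u * inv_mod (p^k) u = 1] (mod p^k)" using inv_mod_props[OF assms(1,2)] by blast
  have "p dvd p^k" using assms(3) by (simp add: dvd_power)
  then have "[u * inv_mod (p^k) u = 1] (mod p)" using c cong_dvd_modulus by blast
  moreover have "p > 1" using assms(1) prime_gt_1_int by blast
  ultimately have "\<not> p dvd u * inv_mod (p^k) u"
  proof (intro notI)
    assume a: "[u * inv_mod (p^k) u = 1] (mod p)" "p > 1" "p dvd u * inv_mod (p^k) u"
    then have "(u * inv_mod (p^k) u) mod p = 1 mod p" by (simp add: cong_def)
    moreover have "(u * inv_mod (p^k) u) mod p = 0" using a(3) by simp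
    moreover have "1 mod p = 1" using a(2) by simp
    ultimately show False by simp
  qed
  then show ?thesis using assms(1)
    by (metis dvd_mult prime_imp_coprime coprime_commute)
qed

lemma shift_sum:
  fixes q c :: int
  assumes "q > 0"
  shows "(\<Sum>u\<in>{0..<q}. f ((u + c) mod q)) = (\<Sum>u\<in>{0..<q}. f u)"
  apply (rule sum.reindex_bij_witness[where i="\<lambda>v. (v - c) mod q" and j="\<lambda>u. (u + c) mod q"])
  using assms by (auto simp: mod_simps)

lemma mult_reindex:
  fixes p u :: int
  assumes "prime p" "coprime u p"
  shows "(\<Sum>x\<in>{0..<p^k}. g x) = (\<Sum>y\<in>{0..<p^k}. g ((u*y) mod p^k))"
proof -
  let ?q = "p^k" let ?v = "inv_mod (p^k) u"
  have q: "?q > 0" using prime_gt_0_int[OF assms(1)] by simp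
  have c: "[u * ?v = 1] (mod ?q)" using inv_mod_props[OF assms] by blast
  have A: "(u * ((?v * x) mod ?q)) mod ?q = x" if x: "x \<in> {0..<?q}" for x
  proof -
    have "[u * ((?v * x) mod ?q) = u * ?v * x] (mod ?q)"
      by (simp add: cong_def mod_simps mult.assoc)
    also have "[u * ?v * x = 1 * x] (mod ?q)" using c by (intro cong_mult) auto
    finally show ?thesis using x by (simp add: cong_def)
  qed
  have B: "(?v * ((u * y) mod ?q)) mod ?q = y" if y: "y \<in> {0..<?q}" for y
  proof -
    have "[?v * ((u * y) mod ?q) = u * ?v * y] (mod ?q)"
      by (simp add: cong_def mod_simps ac_simps)
    also have "[u * ?v * y = 1 * y] (mod ?q)" using c by (intro cong_mult) auto
    finally show ?thesis using y by (simp add: cong_def)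
  qed
  show ?thesis
    by (rule sum.reindex_bij_witness[where j="\<lambda>x. (?v * x) mod ?q" and i="\<lambda>y. (u * y) mod ?q"])
       (use q A B in auto)
qed

lemma ramanujan_zero:
  fixes p m :: int
  assumes "prime p" "k \<ge> 1" "\<not> p^k dvd p * m"
  shows "(\<Sum>u\<in>{0..<p^k}. cnj (psi0 p k u) * eadd (p^k) (u*m)) = 0"
proof -
  let ?q = "p^k"
  let ?f = "\<lambda>u. cnj (psi0 p k u) * eadd (p^k) (u*m)"
  have q: "?q > 0" using prime_gt_0_int[OF assms(1)] by simp
  have pq: "p dvd ?q" using assms(2) by (simp add: dvd_power)
  have ps: "psi0 p k ((u + p) mod ?q) = psi0 p k u" for u
  proof -
    have "(u + p) mod ?q mod p = u mod p" using pq by (simp add: mod_mod_cancel)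
    then have "coprime ((u + p) mod ?q) p = coprime u p"
      by (metis gcd_red_int coprime_iff_gcd_eq_1)
    then show ?thesis unfolding psi0_def by simp
  qed
  have es: "eadd ?q (((u + p) mod ?q) * m) = eadd ?q (u*m) * eadd ?q (p*m)" for u
  proof -
    have "eadd ?q (((u + p) mod ?q) * m) = eadd ?q ((u + p) * m)"
      using q by (intro eadd_cong) (linarith, simp add: cong_def mod_simps)
    then show ?thesis by (simp add: distrib_right eadd_add)
  qed
  have "sum ?f {0..<?q} = (\<Sum>u\<in>{0..<?q}. ?f ((u + p) mod ?q))"
    using shift_sum[OF q, of ?f p] by simp
  also have "\<dots> = sum ?f {0..<?q} * eadd ?q (p*m)"
    by (simp add: ps es sum_distrib_right mult.assoc)
  finally have "sum ?f {0..<?q} * (1 - eadd ?q (p*m)) = 0" by (simp add: algebra_simps)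
  moreover have "eadd ?q (p*m) \<noteq> 1" using eadd_eq_1[OF q] assms(3) by blast
  ultimately show ?thesis by simp
qed

lemma core:
  fixes p b B r :: int and g :: "int \<Rightarrow> complex"
  assumes p: "prime p" and k: "k \<ge> 1"
    and gper: "\<And>z. g (z mod p^k) = g z" and g0: "\<And>z. p dvd z \<Longrightarrow> g z = 0"
    and cond: "\<And>y. \<not> p dvd y \<Longrightarrow> \<not> p^k dvd p * (b*y - B)"
  shows "(\<Sum>u\<in>{0..<p^k}. \<Sum>x\<in>{0..<p^k}. cnj (psi0 p k u) * g (inv_mod (p^k) u * x)
            * eadd (p^k) (b*x + r - u*B)) = 0"
proof -
  let ?q = "p^k"
  have q: "?q > 0" using prime_gt_0_int[OF p] by simp
  have qne: "?q \<noteq> 0" using q by linarith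
  have step1: "(\<Sum>x\<in>{0..<?q}. cnj (psi0 p k u) * g (inv_mod ?q u * x) * eadd ?q (b*x + r - u*B))
     = (\<Sum>y\<in>{0..<?q}. cnj (psi0 p k u) * g y * eadd ?q (u*(b*y - B) + r))" for u
  proof (cases "coprime u p")
    case True
    let ?v = "inv_mod ?q u"
    have c: "[u * ?v = 1] (mod ?q)" using inv_mod_props[OF p True] by blast
    have G: "g (?v * ((u*y) mod ?q)) = g y" for y
    proof -
      have "[?v * ((u*y) mod ?q) = u * ?v * y] (mod ?q)"
        by (simp add: cong_def mod_simps ac_simps)
      also have "[u * ?v * y = 1 * y] (mod ?q)" using c by (intro cong_mult) auto
      finally have "(?v * ((u*y) mod ?q)) mod ?q = y mod ?q" by (simp add: cong_def)
      then show ?thesis by (metis gper)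
    qed
    have E: "eadd ?q (b * ((u*y) mod ?q) + r - u*B) = eadd ?q (u*(b*y - B) + r)" for y
    proof -
      have h: "[b * ((u*y) mod ?q) = b * (u*y)] (mod ?q)" by (simp add: cong_def mod_mult_right_eq)
      have "[b * ((u*y) mod ?q) + r - u*B = b*(u*y) + r - u*B] (mod ?q)"
        using h by (intro cong_diff cong_add cong_refl)
      then have "eadd ?q (b * ((u*y) mod ?q) + r - u*B) = eadd ?q (b*(u*y) + r - u*B)"
        by (rule eadd_cong[OF qne])
      also have "b*(u*y) + r - u*B = u*(b*y - B) + r" by (simp add: algebra_simps)
      finally show ?thesis .
    qed
    show ?thesis
      by (subst mult_reindex[OF p True]) (simp add: G E)
  next
    case False
    then show ?thesis by (simp add: psi0_def)
  qed
  have "(\<Sum>u\<in>{0..<?q}. \<Sum>x\<in>{0..<?q}. cnj (psi0 p k u) * g (inv_mod ?q u * x) * eadd ?q (b*x + r - u*B))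
      = (\<Sum>u\<in>{0..<?q}. \<Sum>y\<in>{0..<?q}. cnj (psi0 p k u) * g y * eadd ?q (u*(b*y - B) + r))"
    by (simp add: step1)
  also have "\<dots> = (\<Sum>y\<in>{0..<?q}. \<Sum>u\<in>{0..<?q}. cnj (psi0 p k u) * g y * eadd ?q (u*(b*y - B) + r))"
    by (rule sum.swap)
  also have "\<dots> = (\<Sum>y\<in>{0..<?q}. g y * eadd ?q r * (\<Sum>u\<in>{0..<?q}. cnj (psi0 p k u) * eadd ?q (u*(b*y - B))))"
    by (simp add: sum_distrib_left eadd_add ac_simps)
  also have "\<dots> = 0"
  proof (rule sum.neutral, intro ballI)
    fix y assume "y \<in> {0..<?q}"
    show "g y * eadd ?q r * (\<Sum>u\<in>{0..<?q}. cnj (psi0 p k u) * eadd ?q (u*(b*y - B))) = 0"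
    proof (cases "p dvd y")
      case True then show ?thesis by (simp add: g0)
    next
      case False
      then show ?thesis using ramanujan_zero[OF p k cond[OF False]] by simp
    qed
  qed
  finally show ?thesis .
qed

lemma swap3: "(\<Sum>a\<in>A. \<Sum>b\<in>A. \<Sum>c\<in>A. F a b c)
   = (\<Sum>b\<in>A. \<Sum>c\<in>A. \<Sum>a\<in>A. F a b c)"
proof -
  have "(\<Sum>a\<in>A. \<Sum>b\<in>A. \<Sum>c\<in>A. F a b c) = (\<Sum>b\<in>A. \<Sum>a\<in>A. \<Sum>c\<in>A. F a b c)"
    by (rule sum.swap)
  also have "\<dots> = (\<Sum>b\<in>A. \<Sum>c\<in>A. \<Sum>a\<in>A. F a b c)"
    by (rule sum.cong[OF refl], rule sum.swap)
  finally show ?thesis .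
qed

lemma swapC: "(\<Sum>u\<in>A. \<Sum>x1\<in>A. \<Sum>x2\<in>A. \<Sum>x3\<in>A. F u x1 x2 x3)
   = (\<Sum>x1\<in>A. \<Sum>x2\<in>A. \<Sum>u\<in>A. \<Sum>x3\<in>A. F u x1 x2 x3)"
  by (rule swap3)

lemma swapB: "(\<Sum>u\<in>A. \<Sum>x1\<in>A. \<Sum>x2\<in>A. \<Sum>x3\<in>A. F u x1 x2 x3)
   = (\<Sum>x1\<in>A. \<Sum>x3\<in>A. \<Sum>u\<in>A. \<Sum>x2\<in>A. F u x1 x2 x3)"
proof -
  have "(\<Sum>u\<in>A. \<Sum>x1\<in>A. \<Sum>x2\<in>A. \<Sum>x3\<in>A. F u x1 x2 x3)
     = (\<Sum>u\<in>A. \<Sum>x1\<in>A. \<Sum>x3\<in>A. \<Sum>x2\<in>A. F u x1 x2 x3)"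
    by (rule sum.cong[OF refl], rule sum.cong[OF refl], rule sum.swap)
  also have "\<dots> = (\<Sum>x1\<in>A. \<Sum>x3\<in>A. \<Sum>u\<in>A. \<Sum>x2\<in>A. F u x1 x2 x3)"
    by (rule swap3)
  finally show ?thesis .
qed

lemma swapA: "(\<Sum>u\<in>A. \<Sum>x1\<in>A. \<Sum>x2\<in>A. \<Sum>x3\<in>A. F u x1 x2 x3)
   = (\<Sum>x2\<in>A. \<Sum>x3\<in>A. \<Sum>u\<in>A. \<Sum>x1\<in>A. F u x1 x2 x3)"
proof -
  have "(\<Sum>u\<in>A. \<Sum>x1\<in>A. \<Sum>x2\<in>A. \<Sum>x3\<in>A. F u x1 x2 x3)
     = (\<Sum>u\<in>A. \<Sum>x2\<in>A. \<Sum>x3\<in>A. \<Sum>x1\<in>A. F u x1 x2 x3)"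
    by (rule sum.cong[OF refl], rule swap3)
  also have "\<dots> = (\<Sum>x2\<in>A. \<Sum>x3\<in>A. \<Sum>u\<in>A. \<Sum>x1\<in>A. F u x1 x2 x3)"
    by (rule swap3)
  finally show ?thesis .
qed

lemma swapD: "(\<Sum>u\<in>A. \<Sum>x1\<in>A. \<Sum>x2\<in>A. \<Sum>x3\<in>A. F u x1 x2 x3)
   = (\<Sum>x1\<in>A. \<Sum>x2\<in>A. \<Sum>x3\<in>A. \<Sum>u\<in>A. F u x1 x2 x3)"
proof -
  have "(\<Sum>u\<in>A. \<Sum>x1\<in>A. \<Sum>x2\<in>A. \<Sum>x3\<in>A. F u x1 x2 x3)
     = (\<Sum>x1\<in>A. \<Sum>x2\<in>A. \<Sum>u\<in>A. \<Sum>x3\<in>A. F u x1 x2 x3)" by (rule swap3)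
  also have "\<dots> = (\<Sum>x1\<in>A. \<Sum>x2\<in>A. \<Sum>x3\<in>A. \<Sum>u\<in>A. F u x1 x2 x3)"
    by (rule sum.cong[OF refl], rule sum.cong[OF refl], rule sum.swap)
  finally show ?thesis .
qed

lemma Hk_mod:
  fixes p :: int
  assumes "prime p" "k \<ge> 1"
  shows "Hk eps p c0 k xi \<gamma> (m mod p^k) 1 = Hk eps p c0 k xi \<gamma> m 1"
proof -
  have pq: "p dvd p^k" using assms(2) by (simp add: dvd_power)
  have "p dvd (m mod p^k) \<longleftrightarrow> p dvd m" using pq by (simp add: mod_mod_cancel dvd_eq_mod_eq_0)
  moreover have "[normL eps t = m mod p^k] (mod p^k) \<longleftrightarrow> [normL eps t = m] (mod p^k)" for t
    by (simp add: cong_def)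
  ultimately show ?thesis unfolding Hk_def by simp
qed

lemma Hk_dvd: "p dvd m \<Longrightarrow> Hk eps p c0 k xi \<gamma> m 1 = 0"
  unfolding Hk_def by simp

lemma van1:
  fixes p a1 a2 a3 :: int
  assumes p: "prime p" and k: "k \<ge> 1"
    and cond: "\<And>y. \<not> p dvd y \<Longrightarrow> \<not> p^k dvd p * (a1*y - a1*a2*a3)"
  shows "Hhat eps p k k xi \<gamma> (psi0 p k) a1 a2 a3 = 0"
proof -
  let ?A = "{0..<p^k}"
  have "(\<Sum>u\<in>?A. \<Sum>x1\<in>?A. \<Sum>x2\<in>?A. \<Sum>x3\<in>?A. cnj (psi0 p k u)
          * Hk eps p k k xi \<gamma> (inv_mod (p^k) u * x1 * x2 * x3) 1
          * eadd (p^k) (a1 * x1 + a2 * x2 + a3 * x3 - u * a1 * a2 * a3)) = 0"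
  proof (subst swapA, rule sum.neutral, rule ballI, rule sum.neutral, rule ballI)
    fix x2 x3
    define g where "g = (\<lambda>z. Hk eps p k k xi \<gamma> (z * (x2 * x3)) 1)"
    have gper: "g (z mod p^k) = g z" for z
    proof -
      have "g (z mod p^k) = Hk eps p k k xi \<gamma> ((z mod p^k) * (x2 * x3) mod p^k) 1"
        unfolding g_def by (simp only: Hk_mod[OF p k])
      also have "(z mod p^k) * (x2 * x3) mod p^k = z * (x2 * x3) mod p^k"
        by (simp add: mod_mult_left_eq)
      also have "Hk eps p k k xi \<gamma> (z * (x2 * x3) mod p^k) 1 = g z"
        unfolding g_def by (simp only: Hk_mod[OF p k])
      finally show ?thesis .
    qed
    have g0: "p dvd z \<Longrightarrow> g z = 0" for z
      unfolding g_def by (rule Hk_dvd) simp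
    have "(\<Sum>u\<in>?A. \<Sum>x1\<in>?A. cnj (psi0 p k u)
          * Hk eps p k k xi \<gamma> (inv_mod (p^k) u * x1 * x2 * x3) 1
          * eadd (p^k) (a1 * x1 + a2 * x2 + a3 * x3 - u * a1 * a2 * a3))
        = (\<Sum>u\<in>?A. \<Sum>x1\<in>?A. cnj (psi0 p k u) * g (inv_mod (p^k) u * x1)
            * eadd (p^k) (a1*x1 + (a2*x2 + a3*x3) - u*(a1*a2*a3)))"
      unfolding g_def by (rule sum.cong[OF refl], rule sum.cong[OF refl]) (simp add: ac_simps)
    also have "\<dots> = 0"
      by (rule core[OF p k, where g=g and b=a1 and B="a1*a2*a3" and r="a2*x2 + a3*x3"])
         (use gper g0 cond in auto)
    finally show "(\<Sum>u\<in>?A. \<Sum>x1\<in>?A. cnj (psi0 p k u)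
          * Hk eps p k k xi \<gamma> (inv_mod (p^k) u * x1 * x2 * x3) 1
          * eadd (p^k) (a1 * x1 + a2 * x2 + a3 * x3 - u * a1 * a2 * a3)) = 0" .
  qed
  then show ?thesis unfolding Hhat_def by simp
qed

lemma van2:
  fixes p a1 a2 a3 :: int
  assumes p: "prime p" and k: "k \<ge> 1"
    and cond: "\<And>y. \<not> p dvd y \<Longrightarrow> \<not> p^k dvd p * (a2*y - a2*a1*a3)"
  shows "Hhat eps p k k xi \<gamma> (psi0 p k) a1 a2 a3 = 0"
proof -
  let ?A = "{0..<p^k}"
  have "(\<Sum>u\<in>?A. \<Sum>x1\<in>?A. \<Sum>x2\<in>?A. \<Sum>x3\<in>?A. cnj (psi0 p k u)
          * Hk eps p k k xi \<gamma> (inv_mod (p^k) u * x1 * x2 * x3) 1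
          * eadd (p^k) (a1 * x1 + a2 * x2 + a3 * x3 - u * a1 * a2 * a3)) = 0"
  proof (subst swapB, rule sum.neutral, rule ballI, rule sum.neutral, rule ballI)
    fix x1 x3
    define g where "g = (\<lambda>z. Hk eps p k k xi \<gamma> (z * (x1 * x3)) 1)"
    have gper: "g (z mod p^k) = g z" for z
    proof -
      have "g (z mod p^k) = Hk eps p k k xi \<gamma> ((z mod p^k) * (x1 * x3) mod p^k) 1"
        unfolding g_def by (simp only: Hk_mod[OF p k])
      also have "(z mod p^k) * (x1 * x3) mod p^k = z * (x1 * x3) mod p^k"
        by (simp add: mod_mult_left_eq)
      also have "Hk eps p k k xi \<gamma> (z * (x1 * x3) mod p^k) 1 = g z"
        unfolding g_def by (simp only: Hk_mod[OF p k])
      finally show ?thesis .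
    qed
    have g0: "p dvd z \<Longrightarrow> g z = 0" for z
      unfolding g_def by (rule Hk_dvd) simp
    have "(\<Sum>u\<in>?A. \<Sum>x2\<in>?A. cnj (psi0 p k u)
          * Hk eps p k k xi \<gamma> (inv_mod (p^k) u * x1 * x2 * x3) 1
          * eadd (p^k) (a1 * x1 + a2 * x2 + a3 * x3 - u * a1 * a2 * a3))
        = (\<Sum>u\<in>?A. \<Sum>x2\<in>?A. cnj (psi0 p k u) * g (inv_mod (p^k) u * x2)
            * eadd (p^k) (a2*x2 + (a1*x1 + a3*x3) - u*(a2*a1*a3)))"
      unfolding g_def by (rule sum.cong[OF refl], rule sum.cong[OF refl]) (simp add: ac_simps)
    also have "\<dots> = 0"
      by (rule core[OF p k, where g=g and b=a2 and B="a2*a1*a3" and r="a1*x1 + a3*x3"])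
         (use gper g0 cond in auto)
    finally show "(\<Sum>u\<in>?A. \<Sum>x2\<in>?A. cnj (psi0 p k u)
          * Hk eps p k k xi \<gamma> (inv_mod (p^k) u * x1 * x2 * x3) 1
          * eadd (p^k) (a1 * x1 + a2 * x2 + a3 * x3 - u * a1 * a2 * a3)) = 0" .
  qed
  then show ?thesis unfolding Hhat_def by simp
qed

lemma van3:
  fixes p a1 a2 a3 :: int
  assumes p: "prime p" and k: "k \<ge> 1"
    and cond: "\<And>y. \<not> p dvd y \<Longrightarrow> \<not> p^k dvd p * (a3*y - a3*a1*a2)"
  shows "Hhat eps p k k xi \<gamma> (psi0 p k) a1 a2 a3 = 0"
proof -
  let ?A = "{0..<p^k}"
  have "(\<Sum>u\<in>?A. \<Sum>x1\<in>?A. \<Sum>x2\<in>?A. \<Sum>x3\<in>?A. cnj (psi0 p k u)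
          * Hk eps p k k xi \<gamma> (inv_mod (p^k) u * x1 * x2 * x3) 1
          * eadd (p^k) (a1 * x1 + a2 * x2 + a3 * x3 - u * a1 * a2 * a3)) = 0"
  proof (subst swapC, rule sum.neutral, rule ballI, rule sum.neutral, rule ballI)
    fix x1 x2
    define g where "g = (\<lambda>z. Hk eps p k k xi \<gamma> (z * (x1 * x2)) 1)"
    have gper: "g (z mod p^k) = g z" for z
    proof -
      have "g (z mod p^k) = Hk eps p k k xi \<gamma> ((z mod p^k) * (x1 * x2) mod p^k) 1"
        unfolding g_def by (simp only: Hk_mod[OF p k])
      also have "(z mod p^k) * (x1 * x2) mod p^k = z * (x1 * x2) mod p^k"
        by (simp add: mod_mult_left_eq)
      also have "Hk eps p k k xi \<gamma> (z * (x1 * x2) mod p^k) 1 = g z"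
        unfolding g_def by (simp only: Hk_mod[OF p k])
      finally show ?thesis .
    qed
    have g0: "p dvd z \<Longrightarrow> g z = 0" for z
      unfolding g_def by (rule Hk_dvd) simp
    have "(\<Sum>u\<in>?A. \<Sum>x3\<in>?A. cnj (psi0 p k u)
          * Hk eps p k k xi \<gamma> (inv_mod (p^k) u * x1 * x2 * x3) 1
          * eadd (p^k) (a1 * x1 + a2 * x2 + a3 * x3 - u * a1 * a2 * a3))
        = (\<Sum>u\<in>?A. \<Sum>x3\<in>?A. cnj (psi0 p k u) * g (inv_mod (p^k) u * x3)
            * eadd (p^k) (a3*x3 + (a1*x1 + a2*x2) - u*(a3*a1*a2)))"
      unfolding g_def by (rule sum.cong[OF refl], rule sum.cong[OF refl]) (simp add: ac_simps)
    also have "\<dots> = 0"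
      by (rule core[OF p k, where g=g and b=a3 and B="a3*a1*a2" and r="a1*x1 + a2*x2"])
         (use gper g0 cond in auto)
    finally show "(\<Sum>u\<in>?A. \<Sum>x3\<in>?A. cnj (psi0 p k u)
          * Hk eps p k k xi \<gamma> (inv_mod (p^k) u * x1 * x2 * x3) 1
          * eadd (p^k) (a1 * x1 + a2 * x2 + a3 * x3 - u * a1 * a2 * a3)) = 0" .
  qed
  then show ?thesis unfolding Hhat_def by simp
qed

lemma coprime_mod_pk:
  fixes p a :: int
  assumes "k \<ge> 1"
  shows "coprime (a mod p^k) p \<longleftrightarrow> coprime a p"
proof -
  have pq: "p dvd p^k" using assms by (simp add: dvd_power)
  have "(a mod p^k) mod p = a mod p" using pq by (simp add: mod_mod_cancel)
  then show ?thesis by (metis gcd_red_int coprime_iff_gcd_eq_1)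
qed

lemma inv_inv_mod:
  fixes p u X :: int
  assumes p: "prime p" and k: "k \<ge> 1" and u: "u \<in> {0..<p^k}" "coprime u p" and X: "coprime X p"
  shows "(inv_mod (p^k) ((inv_mod (p^k) u * X) mod p^k) * X) mod p^k = u"
proof -
  let ?q = "p^k" let ?v = "inv_mod ?q u"
  let ?w = "(?v * X) mod ?q"
  have cw: "coprime ?w p" using inv_mod_coprime[OF p u(2) k] X
    by (simp add: coprime_mod_pk[OF k])
  have c1: "[u * ?v = 1] (mod ?q)" using inv_mod_props[OF p u(2)] by blast
  have c2: "[?w * inv_mod ?q ?w = 1] (mod ?q)" using inv_mod_props[OF p cw] by blast
  have "[inv_mod ?q ?w * X = inv_mod ?q ?w * X * 1] (mod ?q)" by simp
  also have "[inv_mod ?q ?w * X * 1 = inv_mod ?q ?w * X * (u * ?v)] (mod ?q)"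
    using c1 by (intro cong_mult cong_refl) (simp add: cong_sym)
  also have "inv_mod ?q ?w * X * (u * ?v) = inv_mod ?q ?w * (?v * X) * u" by (simp add: ac_simps)
  also have "[inv_mod ?q ?w * (?v * X) * u = inv_mod ?q ?w * ?w * u] (mod ?q)"
    by (intro cong_mult cong_refl) (simp add: cong_def)
  also have "[inv_mod ?q ?w * ?w * u = 1 * u] (mod ?q)"
    using c2 by (intro cong_mult cong_refl) (simp add: ac_simps)
  finally show ?thesis using u(1) by (simp add: cong_def)
qed

lemma sumK:
  fixes p X :: int
  assumes p: "prime p" and k: "k \<ge> 1" and X: "coprime X p"
  shows "(\<Sum>u\<in>{0..<p^k}. cnj (psi0 p k u) * Hk eps p k k xi \<gamma> (inv_mod (p^k) u * X) 1)
       = cnj \<gamma> * tauL eps p k xi"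
proof -
  let ?q = "p^k"
  let ?U = "{u\<in>{0..<?q}. coprime u p}"
  let ?H = "\<lambda>m. Hk eps p k k xi \<gamma> m 1"
  let ?f = "\<lambda>t. xi t * eadd ?q (- traceL t)"
  have q: "?q > 0" using prime_gt_0_int[OF p] by simp
  have "(\<Sum>u\<in>{0..<?q}. cnj (psi0 p k u) * ?H (inv_mod ?q u * X))
      = (\<Sum>u\<in>?U. ?H (inv_mod ?q u * X))"
    by (subst sum.inter_filter) (simp, rule sum.cong[OF refl], simp add: psi0_def)
  also have "\<dots> = (\<Sum>u\<in>?U. ?H ((inv_mod ?q u * X) mod ?q))"
    by (simp only: Hk_mod[OF p k])
  also have "\<dots> = (\<Sum>m\<in>?U. ?H m)"
  proof (rule sum.reindex_bij_witness[where i="\<lambda>m. (inv_mod ?q m * X) mod ?q"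
                                       and j="\<lambda>u. (inv_mod ?q u * X) mod ?q"])
    fix u assume "u \<in> ?U"
    then show "(inv_mod ?q ((inv_mod ?q u * X) mod ?q) * X) mod ?q = u"
      using inv_inv_mod[OF p k _ _ X] by blast
  next
    fix u assume "u \<in> ?U"
    then show "(inv_mod ?q u * X) mod ?q \<in> ?U"
      using inv_mod_coprime[OF p _ k] X q by (simp add: coprime_mod_pk[OF k])
  next
    fix u assume "u \<in> ?U"
    then show "(inv_mod ?q ((inv_mod ?q u * X) mod ?q) * X) mod ?q = u"
      using inv_inv_mod[OF p k _ _ X] by blast
  next
    fix u assume "u \<in> ?U"
    then show "(inv_mod ?q u * X) mod ?q \<in> ?U"
      using inv_mod_coprime[OF p _ k] X q by (simp add: coprime_mod_pk[OF k])
  qed simp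
  also have "\<dots> = (\<Sum>m\<in>?U. cnj \<gamma> * (\<Sum>t\<in>{t. t \<in> unitsL eps p k \<and> normL eps t mod ?q = m}. ?f t))"
  proof (rule sum.cong[OF refl])
    fix m assume m: "m \<in> ?U"
    then have nd: "\<not> p dvd m * 1" using p
      by (simp, metis coprime_common_divisor dvd_refl not_prime_unit)
    have "{t \<in> unitsL eps p k. [normL eps t = m * 1] (mod ?q)}
        = {t. t \<in> unitsL eps p k \<and> normL eps t mod ?q = m}"
      using m by (auto simp: cong_def)
    then show "?H m = cnj \<gamma> * (\<Sum>t\<in>{t. t \<in> unitsL eps p k \<and> normL eps t mod ?q = m}. ?f t)"
      unfolding Hk_def using nd by simp
  qed
  also have "\<dots> = cnj \<gamma> * (\<Sum>t\<in>unitsL eps p k. ?f t)"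
  proof -
    have fin: "finite (unitsL eps p k)"
      by (rule finite_subset[of _ "{0..<?q} \<times> {0..<?q}"]) (auto simp: unitsL_def mem_Times_iff)
    have img: "(\<lambda>t. normL eps t mod ?q) ` unitsL eps p k \<subseteq> ?U"
    proof
      fix m assume "m \<in> (\<lambda>t. normL eps t mod ?q) ` unitsL eps p k"
      then obtain t where t: "t \<in> unitsL eps p k" "m = normL eps t mod ?q" by blast
      have "\<not> p dvd normL eps t" using t(1) unfolding unitsL_def by simp
      then have "coprime (normL eps t) p" using p
        by (metis coprime_commute prime_imp_coprime)
      then show "m \<in> ?U" using t(2) q by (simp add: coprime_mod_pk[OF k])
    qed
    have sU: "?U \<subseteq> {0..<?q}" by blast
    have fU: "finite ?U" by (rule finite_subset[OF sU finite_atLeastLessThan_int])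
    have eq: "(\<Sum>m\<in>?U. \<Sum>t\<in>{t. t \<in> unitsL eps p k \<and> normL eps t mod ?q = m}. ?f t)
        = (\<Sum>t\<in>unitsL eps p k. ?f t)"
      by (rule sum.group[OF fin fU img])
    show ?thesis by (simp only: sum_distrib_left[symmetric] eq)
  qed
  finally show ?thesis unfolding tauL_def .
qed

lemma case2:
  fixes p a1 a2 a3 :: int
  assumes p: "prime p" and k: "k \<ge> 1" and qA: "p^k dvd a1 * a2 * a3"
  shows "Hhat eps p k k xi \<gamma> (psi0 p k) a1 a2 a3
       = cnj \<gamma> * inverse (of_int (p ^ (2 * k))) * tauL eps p k xi
                  * Ram0 p k a1 * Ram0 p k a2 * Ram0 p k a3"
proof -
  let ?q = "p^k"
  let ?A = "{0..<?q}"
  let ?C = "cnj \<gamma> * tauL eps p k xi"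
  let ?R = "\<lambda>a x. if coprime x p then eadd ?q (a * x) else 0"
  have q: "?q > 0" using prime_gt_0_int[OF p] by simp
  have qne: "?q \<noteq> 0" using q by linarith
  have S: "(\<Sum>u\<in>?A. \<Sum>x1\<in>?A. \<Sum>x2\<in>?A. \<Sum>x3\<in>?A. cnj (psi0 p k u)
          * Hk eps p k k xi \<gamma> (inv_mod (p^k) u * x1 * x2 * x3) 1
          * eadd (p^k) (a1 * x1 + a2 * x2 + a3 * x3 - u * a1 * a2 * a3))
      = (\<Sum>x1\<in>?A. \<Sum>x2\<in>?A. \<Sum>x3\<in>?A. \<Sum>u\<in>?A. cnj (psi0 p k u)
          * Hk eps p k k xi \<gamma> (inv_mod (p^k) u * x1 * x2 * x3) 1
          * eadd (p^k) (a1 * x1 + a2 * x2 + a3 * x3 - u * a1 * a2 * a3))"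
    by (rule swapD)
  have inner: "(\<Sum>u\<in>?A. cnj (psi0 p k u)
          * Hk eps p k k xi \<gamma> (inv_mod (p^k) u * x1 * x2 * x3) 1
          * eadd (p^k) (a1 * x1 + a2 * x2 + a3 * x3 - u * a1 * a2 * a3))
      = ?C * (?R a1 x1 * ?R a2 x2 * ?R a3 x3)" for x1 x2 x3
  proof -
    have E0: "eadd ?q (a1 * x1 + a2 * x2 + a3 * x3 - u * a1 * a2 * a3) = eadd ?q (a1 * x1 + a2 * x2 + a3 * x3)" for u
    proof (rule eadd_cong[OF qne])
      have "?q dvd u * (a1 * a2 * a3)" using qA by simp
      then show "[a1 * x1 + a2 * x2 + a3 * x3 - u * a1 * a2 * a3 = a1 * x1 + a2 * x2 + a3 * x3] (mod ?q)"
        by (simp add: cong_iff_dvd_diff mult.assoc)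
    qed
    have E: "cnj (psi0 p k u)
          * Hk eps p k k xi \<gamma> (inv_mod (p^k) u * x1 * x2 * x3) 1
          * eadd (p^k) (a1 * x1 + a2 * x2 + a3 * x3 - u * a1 * a2 * a3) = cnj (psi0 p k u)
          * Hk eps p k k xi \<gamma> (inv_mod (p^k) u * x1 * x2 * x3) 1 * eadd ?q (a1 * x1 + a2 * x2 + a3 * x3)" for u
      unfolding E0[of u] ..
    have "(\<Sum>u\<in>?A. cnj (psi0 p k u)
          * Hk eps p k k xi \<gamma> (inv_mod (p^k) u * x1 * x2 * x3) 1
          * eadd (p^k) (a1 * x1 + a2 * x2 + a3 * x3 - u * a1 * a2 * a3))
        = (\<Sum>u\<in>?A. cnj (psi0 p k u)
          * Hk eps p k k xi \<gamma> (inv_mod (p^k) u * x1 * x2 * x3) 1 * eadd ?q (a1 * x1 + a2 * x2 + a3 * x3))"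
      by (rule sum.cong[OF refl], rule E)
    also have "\<dots> = (\<Sum>u\<in>?A. cnj (psi0 p k u) * Hk eps p k k xi \<gamma> (inv_mod (p^k) u * (x1 * x2 * x3)) 1)
           * eadd ?q (a1 * x1 + a2 * x2 + a3 * x3)"
      by (simp only: sum_distrib_right mult.assoc)
    also have "\<dots> = (if coprime (x1 * x2 * x3) p then ?C else 0) * eadd ?q (a1 * x1 + a2 * x2 + a3 * x3)"
    proof (cases "coprime (x1 * x2 * x3) p")
      case True
      then show ?thesis using sumK[OF p k True] by simp
    next
      case False
      then have "p dvd x1 * x2 * x3" using p by (metis prime_imp_coprime coprime_commute)
      then have "Hk eps p k k xi \<gamma> (inv_mod (p^k) u * (x1 * x2 * x3)) 1 = 0" for u
        by (intro Hk_dvd) simp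
      then have "(\<Sum>u\<in>?A. cnj (psi0 p k u) * Hk eps p k k xi \<gamma> (inv_mod (p^k) u * (x1 * x2 * x3)) 1) = 0"
        by (intro sum.neutral ballI) simp
      then show ?thesis by (simp only: if_not_P[OF False] mult_zero_left)
    qed
    also have "\<dots> = ?C * (?R a1 x1 * ?R a2 x2 * ?R a3 x3)"
      by (simp add: eadd_add)
    finally show ?thesis .
  qed
  have Ram: "Ram0 p k a = (\<Sum>x\<in>?A. ?R a x)" for a
    unfolding Ram0_def by (subst sum.inter_filter) simp_all
  have P: "Ram0 p k a1 * Ram0 p k a2 * Ram0 p k a3
      = (\<Sum>x1\<in>?A. \<Sum>x2\<in>?A. \<Sum>x3\<in>?A. ?R a1 x1 * ?R a2 x2 * ?R a3 x3)"
  proof -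
    have "Ram0 p k a1 * Ram0 p k a2 * Ram0 p k a3
        = (\<Sum>x1\<in>?A. ?R a1 x1 * Ram0 p k a2 * Ram0 p k a3)"
      unfolding Ram[of a1] by (simp only: sum_distrib_right)
    also have "\<dots> = (\<Sum>x1\<in>?A. \<Sum>x2\<in>?A. ?R a1 x1 * ?R a2 x2 * Ram0 p k a3)"
      unfolding Ram[of a2] by (simp only: sum_distrib_right sum_distrib_left)
    also have "\<dots> = (\<Sum>x1\<in>?A. \<Sum>x2\<in>?A. \<Sum>x3\<in>?A. ?R a1 x1 * ?R a2 x2 * ?R a3 x3)"
      unfolding Ram[of a3] by (simp only: sum_distrib_left)
    finally show ?thesis .
  qed
  have T: "(\<Sum>x1\<in>?A. \<Sum>x2\<in>?A. \<Sum>x3\<in>?A. ?C * (?R a1 x1 * ?R a2 x2 * ?R a3 x3))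
      = ?C * (Ram0 p k a1 * Ram0 p k a2 * Ram0 p k a3)"
    by (simp only: P sum_distrib_left)
  show ?thesis
    unfolding Hhat_def S inner T by (simp only: ac_simps)
qed

lemma dvd_pk_cancel:
  fixes p m :: int
  assumes "prime p" "k \<ge> 1" "p^k dvd p * m"
  shows "p^(k-1) dvd m"
proof -
  from assms(2) obtain j where kj: "k = Suc j" by (cases k) auto
  have "p \<noteq> 0" using prime_gt_0_int[OF assms(1)] by simp
  then show ?thesis using assms(3) kj by simp
qed

lemma cond_unit:
  fixes p b B :: int
  assumes p: "prime p" and k: "k \<ge> 2" and b: "\<not> p dvd b" and B: "p dvd B"
  shows "\<not> p dvd y \<Longrightarrow> \<not> p^k dvd p * (b*y - B)"
proof
  assume y: "\<not> p dvd y" and d: "p^k dvd p * (b*y - B)"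
  have "p^(k-1) dvd b*y - B" using dvd_pk_cancel[OF p _ d] k by simp
  moreover have "p dvd p^(k-1)" using k by (simp add: dvd_power)
  ultimately have "p dvd b*y - B" using dvd_trans by blast
  then have "p dvd (b*y - B) + B" using B by (rule dvd_add)
  then have "p dvd b*y" by simp
  then show False using b y p by (simp add: prime_dvd_mult_iff)
qed

theorem lemma5p12:
  fixes p eps a1 a2 a3 :: int and k :: nat and xi :: "int \<times> int \<Rightarrow> complex" and \<gamma> :: complex
  assumes "prime p" and "odd p"
    and "\<not> QuadRes p eps"
    and "k \<ge> 2" and "k \<ge> 10 \<or> p \<ge> 10"
    and "norm \<gamma> = 1"
    and "admissible_xi eps p k xi"
    and "p dvd a1 * a2 * a3"
  shows "(\<not> p ^ k dvd a1 * a2 * a3 \<longrightarrow> Hhat eps p k k xi \<gamma> (psi0 p k) a1 a2 a3 = 0)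
       \<and> (p ^ k dvd a1 * a2 * a3 \<longrightarrow>
            Hhat eps p k k xi \<gamma> (psi0 p k) a1 a2 a3
              = cnj \<gamma> * inverse (of_int (p ^ (2 * k))) * tauL eps p k xi
                  * Ram0 p k a1 * Ram0 p k a2 * Ram0 p k a3)"
proof -
  note p = assms(1)
  have k1: "k \<ge> 1" and k2: "k \<ge> 2" using assms(4) by auto
  show ?thesis
  proof (cases "p ^ k dvd a1 * a2 * a3")
    case True
    then show ?thesis using case2[OF p k1 True] by simp
  next
    case False
    have "Hhat eps p k k xi \<gamma> (psi0 p k) a1 a2 a3 = 0"
    proof (cases "p dvd a1 \<and> p dvd a2 \<and> p dvd a3")
      case all: True
      show ?thesis
      proof (rule van1[OF p k1])
        fix y assume y: "\<not> p dvd y"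
        show "\<not> p^k dvd p * (a1*y - a1*a2*a3)"
        proof
          assume d: "p^k dvd p * (a1*y - a1*a2*a3)"
          have d1: "p^(k-1) dvd a1 * (y - a2*a3)" using dvd_pk_cancel[OF p k1 d]
            by (simp add: algebra_simps)
          have "\<not> p dvd (y - a2*a3)"
          proof
            assume "p dvd y - a2*a3"
            moreover have "p dvd a2*a3" using all by simp
            ultimately have "p dvd (y - a2*a3) + a2*a3" by (rule dvd_add)
            then have "p dvd y" by simp
            then show False using y by simp
          qed
          then have "coprime p (y - a2*a3)" using p by (rule prime_imp_coprime[rotated])
          then have "coprime (y - a2*a3) p" by (simp add: coprime_commute)
          then have "coprime (p^(k-1)) (y - a2*a3)" by (simp add: coprime_commute)
          then have "p^(k-1) dvd a1" using d1 coprime_dvd_mult_left_iff by blast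
          moreover obtain c2 where "a2 = p * c2" using all by blast
          moreover obtain c3 where "a3 = p * c3" using all by blast
          ultimately have "p^(k-1) * p * p dvd a1 * a2 * a3" by (simp add: mult_dvd_mono)
          moreover have "p^k dvd p^(k-1) * p * p"
          proof -
            from k1 obtain j where kj: "k = Suc j" by (cases k) auto
            have "p^k = p^(k-1) * p" using kj by simp
            then show ?thesis by simp
          qed
          ultimately show False using False by (meson dvd_trans)
        qed
      qed
    next
      case some: False
      have pA: "p dvd a1 * a2 * a3" using assms(8) .
      show ?thesis
      proof (cases "p dvd a1")
        case n1: False
        show ?thesis
          by (rule van1[OF p k1]) (rule cond_unit[OF p k2 n1], use pA in simp_all)
      next
        case d1: True
        show ?thesis
        proof (cases "p dvd a2")
          case n2: False
          have "p dvd a2 * a1 * a3" using pA by (simp add: ac_simps)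
          then show ?thesis
            by (intro van2[OF p k1] cond_unit[OF p k2 n2]) simp_all
        next
          case d2: True
          then have n3: "\<not> p dvd a3" using some d1 by blast
          have "p dvd a3 * a1 * a2" using pA by (simp add: ac_simps)
          then show ?thesis
            by (intro van3[OF p k1] cond_unit[OF p k2 n3]) simp_all
        qed
      qed
    qed
    then show ?thesis using False by simp
  qed
qed

end
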